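(* For the g-cell structure $\{(G_i,r_i),g_i^{i+1}\}_{i\in\mathbb{N}}$ constructed below, the quotient space $G^\ast=G_\infty/r$ is not regular: the point $\pi(\bar a)$, where $\bar a=(a_1,a_2,\dots)$, and the closed set $\pi(\{(b_1^k,b_2^k,\dots):k\in\mathbb{N}\})$, which does not contain $\pi(\bar a)$, cannot be separated by disjoint open sets. In particular, there exist spaces admitting a g-cell structure (with all $G_i$ discrete) which are not regular.
   Context: Construction. Let $L_1=0$ and $L_{i+1}=L_i+i$. All sets are discrete and all named elements distinct. $G_1=\{a_1\}\cup\{b_1^k:k\in\mathbb{N}\}$. For $i\ge2$, with $C^i_k=\{c^1_{i,k},c^2_{i,k}\}$ for $1\le k\le L_i$, $G_i=\{a_i\}\cup\{b_i^k:k\in\mathbb{N}\}\cup\bigcup_{k=1}^{L_i}C^i_k\cup\{d_i^k:k\in\mathbb{N}\}$. $r_i$ is the union of $\Delta_{G_i}$ with $\{(a_i,b_i^k),(b_i^k,a_i):k\ge i\}$, $\{(b_i^k,b_i^n):k,n\ge i\}$, $\{(a,b):a,b\in C^i_k,\ 1\le k\le L_i\}$ and $\{(d_i^{(i-1)j+k},b_i^k),(b_i^k,d_i^{(i-1)j+k}):1\le k<i,\ j\ge0\}$. The map $g_i^{i+1}:G_{i+1}\to G_i$: $a_{i+1}\mapsto a_i$; $b_{i+1}^k\mapsto b_i^k$; $c^1_{i+1,1}\mapsto a_i$; $c^2_{i+1,1}\mapsto b_i^i$; $c^\rho_{i+1,k}\mapsto c^\rho_{i,k-1}$ ($\rho=1,2$,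 $2\le k\le L_i+1$); $c^1_{i+1,k}\mapsto d_i^{k-(L_i+1)}$ and $c^2_{i+1,k}\mapsto b_i^{k-(L_i+1)}$ ($L_i+2\le k\le L_{i+1}$); $d_{i+1}^k\mapsto d_i^{(i-1)(j+1)+n}$ if $k=ij+n$, $0<n<i$, $j\ge0$; $d_{i+1}^k\mapsto a_i$ if $k=ij$, $j\ge1$. $G_\infty=\{(x_n)\in\prod G_n:g_i^{i+1}(x_{i+1})=x_i\ \forall i\}$ with the product topology; the natural relation $r=\{(\bar x,\bar y)\in G_\infty^2:(x_n,y_n)\in r_n\ \forall n\}$ is an equivalence relation (this sequence is a g-cell structure); $G^\ast=G_\infty/r$ has the quotient topology and $\pi:G_\infty\to G^\ast$ is the quotient map. A space admits a g-cell structure if it is homeomorphic to $G^\ast$ for some inverse sequence of cellular graphs (pairs of a nonempty space and a reflexive symmetric relation, with continuous edge-preserving bonding maps) whose natural relation is an equivalence relation. Regular means: every point and closed set not containing it have disjoint open neighbourhoods. *)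

theory Defs
  imports "HOL-Analysis.Analysis"
begin

text \<open>Inverse sequences are indexed by n >= 1 (index 0 is unused).
  X n is the space G_n, R n the relation r_n, f n the bonding map G_(n+1) -> G_n.\<close>

definition cellular_graph :: "'a topology \<Rightarrow> 'a rel \<Rightarrow> bool" where
  "cellular_graph X R \<longleftrightarrow> topspace X \<noteq> {} \<and> R \<subseteq> topspace X \<times> topspace X
     \<and> (\<forall>x\<in>topspace X. (x, x) \<in> R) \<and> sym R"

definition inv_limit :: "(nat \<Rightarrow> 'a topology) \<Rightarrow> (nat \<Rightarrow> 'a \<Rightarrow> 'a) \<Rightarrow> (nat \<Rightarrow> 'a) set" where
  "inv_limit X f = {x \<in> (\<Pi>\<^sub>E n\<in>{1..}. topspace (X n)). \<forall>i\<ge>1. f i (x (Suc i)) = x i}"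

definition inv_limit_top :: "(nat \<Rightarrow> 'a topology) \<Rightarrow> (nat \<Rightarrow> 'a \<Rightarrow> 'a) \<Rightarrow> (nat \<Rightarrow> 'a) topology" where
  "inv_limit_top X f = subtopology (product_topology X {1..}) (inv_limit X f)"

definition natural_rel :: "(nat \<Rightarrow> 'a topology) \<Rightarrow> (nat \<Rightarrow> 'a rel) \<Rightarrow> (nat \<Rightarrow> 'a \<Rightarrow> 'a) \<Rightarrow> (nat \<Rightarrow> 'a) rel" where
  "natural_rel X R f = {(x, y). x \<in> inv_limit X f \<and> y \<in> inv_limit X f \<and> (\<forall>n\<ge>1. (x n, y n) \<in> R n)}"

definition gcell_structure :: "(nat \<Rightarrow> 'a topology) \<Rightarrow> (nat \<Rightarrow> 'a rel) \<Rightarrow> (nat \<Rightarrow> 'a \<Rightarrow> 'a) \<Rightarrow> bool" where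
  "gcell_structure X R f \<longleftrightarrow>
     (\<forall>i\<ge>1. cellular_graph (X i) (R i)) \<and>
     (\<forall>i\<ge>1. continuous_map (X (Suc i)) (X i) (f i)) \<and>
     (\<forall>i\<ge>1. \<forall>x y. (x, y) \<in> R (Suc i) \<longrightarrow> (f i x, f i y) \<in> R i) \<and>
     equiv (inv_limit X f) (natural_rel X R f)"

definition quotient_top :: "'b topology \<Rightarrow> 'b rel \<Rightarrow> 'b set topology" where
  "quotient_top T E = topology (\<lambda>U. U \<subseteq> topspace T // E \<and>
       openin T {x \<in> topspace T. E `` {x} \<in> U})"

definition qmap :: "'b rel \<Rightarrow> 'b \<Rightarrow> 'b set" where
  "qmap E x = E `` {x}"

datatype elt = Ea nat | Eb nat nat | Ec nat nat nat | Ed nat nat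
  (* Ea i = a_i;  Eb i k = b_i^k;  Ec rho i k = c^rho_{i,k};  Ed i k = d_i^k *)

primrec L :: "nat \<Rightarrow> nat" where
  "L 0 = 0" | "L (Suc i) = L i + i"

definition G :: "nat \<Rightarrow> elt set" where
  "G i = {Ea i} \<union> {Eb i k | k. k \<ge> 1} \<union>
     (if i \<ge> 2 then {Ec \<rho> i k | \<rho> k. \<rho> \<in> {1, 2} \<and> 1 \<le> k \<and> k \<le> L i} \<union> {Ed i k | k. k \<ge> 1}
      else {})"

definition r :: "nat \<Rightarrow> elt rel" where
  "r i = Id_on (G i)
     \<union> {(Ea i, Eb i k) | k. k \<ge> i} \<union> {(Eb i k, Ea i) | k. k \<ge> i}
     \<union> {(Eb i k, Eb i n) | k n. k \<ge> i \<and> n \<ge> i}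
     \<union> {(Ec \<rho> i k, Ec \<sigma> i k) | \<rho> \<sigma> k. \<rho> \<in> {1, 2} \<and> \<sigma> \<in> {1, 2} \<and> 1 \<le> k \<and> k \<le> L i}
     \<union> {(Ed i ((i - 1) * j + k), Eb i k) | j k. 1 \<le> k \<and> k < i}
     \<union> {(Eb i k, Ed i ((i - 1) * j + k)) | j k. 1 \<le> k \<and> k < i}"

text \<open>g i is the bonding map g_i^(i+1) : G_(i+1) -> G_i.\<close>
definition g :: "nat \<Rightarrow> elt \<Rightarrow> elt" where
  "g i x = (case x of
       Ea _ \<Rightarrow> Ea i
     | Eb _ k \<Rightarrow> Eb i k
     | Ec \<rho> _ k \<Rightarrow>
         (if k = 1 then (if \<rho> = 1 then Ea i else Eb i i)
          else if k \<le> L i + 1 then Ec \<rho> i (k - 1)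
          else if \<rho> = 1 then Ed i (k - (L i + 1)) else Eb i (k - (L i + 1)))
     | Ed _ k \<Rightarrow>
         (if k mod i = 0 then Ea i
          else Ed i ((i - 1) * (k div i + 1) + k mod i)))"

definition Gtop :: "nat \<Rightarrow> elt topology" where
  "Gtop i = discrete_topology (G i)"

definition Ginf :: "(nat \<Rightarrow> elt) topology" where
  "Ginf = inv_limit_top Gtop g"

definition rnat :: "(nat \<Rightarrow> elt) rel" where
  "rnat = natural_rel Gtop r g"

definition Gstar :: "(nat \<Rightarrow> elt) set topology" where
  "Gstar = quotient_top Ginf rnat"

definition abar :: "nat \<Rightarrow> elt" where
  "abar = (\<lambda>n. if n \<ge> 1 then Ea n else undefined)"

definition bbar :: "nat \<Rightarrow> nat \<Rightarrow> elt" where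
  "bbar k = (\<lambda>n. if n \<ge> 1 then Eb n k else undefined)"

end

theory Submission
  imports Defs
begin

lemma uniq_rep:
  assumes "(d::nat)*j + k = d*j' + k'" "1 \<le> k" "k \<le> d" "1 \<le> k'" "k' \<le> d"
  shows "k = k'"
proof (cases j j' rule: linorder_cases)
  case less
  hence "d*(j+1) \<le> d*j'" by (intro mult_le_mono2) simp
  thus ?thesis using assms by (simp add: algebra_simps)
next
  case greater
  hence "d*(j'+1) \<le> d*j" by (intro mult_le_mono2) simp
  thus ?thesis using assms by (simp add: algebra_simps)
qed (use assms in simp)

lemma g_maps: "i \<ge> 1 \<Longrightarrow> x \<in> G (Suc i) \<Longrightarrow> g i x \<in> G i"
  apply (cases x)
  apply (auto simp: G_def g_def)
  apply (subgoal_tac "i=1", simp, linarith)+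
  done


lemma G_ge1: "i \<ge> 1 \<Longrightarrow> Ea i \<in> G i" "k \<ge> 1 \<Longrightarrow> Eb i k \<in> G i"
  by (auto simp: G_def)

lemma r_sub: "i \<ge> 1 \<Longrightarrow> r i \<subseteq> G i \<times> G i"
  apply (auto simp: r_def G_def)
  apply (subgoal_tac "i=1", simp, linarith)+
  done

lemma r_db: "m = (i-1)*j + k \<Longrightarrow> 1 \<le> k \<Longrightarrow> k < i \<Longrightarrow> (Ed i m, Eb i k) \<in> r i"
  unfolding r_def by blast

lemma r_bd: "m = (i-1)*j + k \<Longrightarrow> 1 \<le> k \<Longrightarrow> k < i \<Longrightarrow> (Eb i k, Ed i m) \<in> r i"
  unfolding r_def by blast

lemma r_sym: "sym (r i)"
  unfolding sym_def r_def by blast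

lemma r_refl: "x \<in> G i \<Longrightarrow> (x,x) \<in> r i"
  unfolding r_def by auto

lemma d_mod: assumes "(i::nat) \<ge> 1" "1 \<le> k" "k < Suc i"
  shows "k = i \<Longrightarrow> (i*j+k) mod i = 0"
    and "k < i \<Longrightarrow> (i*j+k) mod i = k \<and> (i*j+k) div i = j"
  using assms by auto

lemma edge_Ec: assumes "i \<ge> 1" "\<rho> \<in> {1,2}" "\<sigma> \<in> {1,2}" "1 \<le> k" "k \<le> L (Suc i)"
  shows "(g i (Ec \<rho> (Suc i) k), g i (Ec \<sigma> (Suc i) k)) \<in> r i"
proof -
  consider "k = 1" | "k \<noteq> 1" "k \<le> L i + 1" | "k > L i + 1" by linarith
  thus ?thesis
  proof cases
    case 1 then show ?thesis using assms by (auto simp: g_def r_def G_def)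
  next
    case 2
    hence "i \<ge> 2" using assms by (cases "i = 1") auto
    then show ?thesis using assms 2 by (auto simp: g_def r_def G_def)
  next
    case 3
    hence "i \<ge> 2" using assms by (cases "i = 1") auto
    have "(Ed i (k - (L i + 1)), Eb i (k - (L i + 1))) \<in> r i"
      by (rule r_db[where j=0]) (use 3 assms in auto)
    moreover have "(Eb i (k - (L i + 1)), Ed i (k - (L i + 1))) \<in> r i"
      using calculation r_sym unfolding sym_def by blast
    moreover have "Ed i (k - (L i + 1)) \<in> G i" "Eb i (k - (L i + 1)) \<in> G i"
      using 3 \<open>i\<ge>2\<close> by (auto simp: G_def)
    ultimately show ?thesis using assms 3 by (auto simp: g_def intro: r_refl)
  qed
qed

lemma edge: assumes "i \<ge> 1" "(x,y) \<in> r (Suc i)" shows "(g i x, g i y) \<in> r i"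
  using assms(2) unfolding r_def[of "Suc i"]
proof (elim UnE)
  assume "(x,y) \<in> Id_on (G (Suc i))"
  thus ?thesis using g_maps[OF assms(1)] r_refl by auto
next
  assume "(x, y) \<in> {(Ea (Suc i), Eb (Suc i) k) |k. Suc i \<le> k}"
  thus ?thesis using assms by (auto simp: g_def r_def)
next
  assume "(x, y) \<in> {(Eb (Suc i) k, Ea (Suc i)) |k. Suc i \<le> k}"
  thus ?thesis using assms by (auto simp: g_def r_def)
next
  assume "(x, y) \<in> {(Eb (Suc i) k, Eb (Suc i) n) |k n. Suc i \<le> k \<and> Suc i \<le> n}"
  thus ?thesis using assms by (auto simp: g_def r_def)
next
  assume "(x, y) \<in> {(Ec \<rho> (Suc i) k, Ec \<sigma> (Suc i) k) |\<rho> \<sigma> k. \<rho> \<in> {1, 2} \<and> \<sigma> \<in> {1, 2} \<and> 1 \<le> k \<and> k \<le> L (Suc i)}"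
  thus ?thesis using assms edge_Ec by blast
next
  assume "(x, y) \<in> {(Ed (Suc i) ((Suc i - 1) * j + k), Eb (Suc i) k) |j k. 1 \<le> k \<and> k < Suc i}"
  then obtain j k where x: "x = Ed (Suc i) (i*j+k)" "y = Eb (Suc i) k" "1 \<le> k" "k < Suc i" by auto
  show ?thesis
  proof (cases "k = i")
    case True
    thus ?thesis using x d_mod(1)[OF assms(1) x(3,4)] by (auto simp: g_def r_def)
  next
    case False
    hence "k < i" using x by simp
    thus ?thesis using x d_mod(2)[OF assms(1) x(3,4)] unfolding g_def
      by (auto intro!: r_db[where j="j+1"])
  qed
next
  assume "(x, y) \<in> {(Eb (Suc i) k, Ed (Suc i) ((Suc i - 1) * j + k)) |j k. 1 \<le> k \<and> k < Suc i}"
  then obtain j k where x: "y = Ed (Suc i) (i*j+k)" "x = Eb (Suc i) k" "1 \<le> k" "k < Suc i" by auto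
  have "(g i y, g i x) \<in> r i"
  proof (cases "k = i")
    case True
    thus ?thesis using x d_mod(1)[OF assms(1) x(3,4)] by (auto simp: g_def r_def)
  next
    case False
    hence "k < i" using x by simp
    thus ?thesis using x d_mod(2)[OF assms(1) x(3,4)] unfolding g_def
      by (auto intro!: r_db[where j="j+1"])
  qed
  thus ?thesis using r_sym unfolding sym_def by blast
qed

lemma G_Ea[simp]: "Ea i \<in> G i" by (simp add: G_def)

lemma uniq_rep': "((i::nat) - 1)*j + k = (i-1)*j' + k' \<Longrightarrow> 1 \<le> k \<Longrightarrow> k < i \<Longrightarrow> 1 \<le> k' \<Longrightarrow> k' < i \<Longrightarrow> k = k'"
  by (rule uniq_rep[of "i-1" j k j' k']) auto

lemma trans_fail: assumes "(p,q) \<in> r N" "(q,s) \<in> r N" "\<forall>m. p \<noteq> Ed N m" shows "(p,s) \<in> r N"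
  using assms(1)[unfolded r_def[of N]]
proof (elim UnE)
  assume "(p, q) \<in> Id_on (G N)" thus ?thesis using assms(2) by auto
next
  assume "(p, q) \<in> {(Ea N, Eb N k) |k. N \<le> k}"
  thus ?thesis using assms(2) unfolding r_def by auto
next
  assume "(p, q) \<in> {(Eb N k, Ea N) |k. N \<le> k}"
  thus ?thesis using assms(2) unfolding r_def by auto
next
  assume "(p, q) \<in> {(Eb N k, Eb N n) |k n. N \<le> k \<and> N \<le> n}"
  thus ?thesis using assms(2) unfolding r_def by auto
next
  assume "(p, q) \<in> {(Ec \<rho> N k, Ec \<sigma> N k) |\<rho> \<sigma> k. \<rho> \<in> {1, 2} \<and> \<sigma> \<in> {1, 2} \<and> 1 \<le> k \<and> k \<le> L N}"
  thus ?thesis using assms(2) unfolding r_def by auto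
next
  assume "(p, q) \<in> {(Ed N ((N - 1) * j + k), Eb N k) |j k. 1 \<le> k \<and> k < N}"
  thus ?thesis using assms(3) by auto
next
  assume "(p, q) \<in> {(Eb N k, Ed N ((N - 1) * j + k)) |j k. 1 \<le> k \<and> k < N}"
  then obtain j k where pq: "p = Eb N k" "q = Ed N ((N - 1) * j + k)" "1 \<le> k" "k < N" by auto
  have pG: "p \<in> G N" using pq by (auto simp: G_def)
  from assms(2) pq show ?thesis unfolding r_def[of N]
    using uniq_rep'[of N j k] pG by auto
qed

lemma topGtop[simp]: "topspace (Gtop i) = G i" by (simp add: Gtop_def)

lemma il_step: "x \<in> inv_limit Gtop g \<Longrightarrow> i \<ge> 1 \<Longrightarrow> g i (x (Suc i)) = x i"
  by (simp add: inv_limit_def)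

lemma il_G: "x \<in> inv_limit Gtop g \<Longrightarrow> i \<ge> 1 \<Longrightarrow> x i \<in> G i"
  by (auto simp: inv_limit_def PiE_def Pi_def)

lemma down_aux: assumes "x \<in> inv_limit Gtop g" "z \<in> inv_limit Gtop g"
  shows "n \<ge> 1 \<Longrightarrow> (x (n+d), z (n+d)) \<in> r (n+d) \<Longrightarrow> (x n, z n) \<in> r n"
proof (induction d arbitrary: n)
  case 0 thus ?case by simp
next
  case (Suc d)
  have "(x (Suc n + d), z (Suc n + d)) \<in> r (Suc n + d)" using Suc.prems by simp
  hence "(x (Suc n), z (Suc n)) \<in> r (Suc n)" using Suc.IH[of "Suc n"] by simp
  hence "(g n (x (Suc n)), g n (z (Suc n))) \<in> r n" using edge Suc.prems by blast
  thus ?case using il_step assms Suc.prems by simp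
qed

lemma down: assumes "x \<in> inv_limit Gtop g" "z \<in> inv_limit Gtop g" "1 \<le> n" "n \<le> N"
  "(x N, z N) \<in> r N" shows "(x n, z n) \<in> r n"
  using down_aux[OF assms(1,2) assms(3), of "N - n"] assms(4,5) by simp

lemma desc_nat: assumes "\<forall>t. (f::nat\<Rightarrow>nat) (Suc t) < f t" shows False
proof -
  have "f t + t \<le> f 0" for t
  proof (induction t)
    case (Suc t)
    have "f (Suc t) < f t" using assms by blast
    thus ?case using Suc.IH by simp
  qed simp
  from this[of "Suc (f 0)"] show False by simp
qed

lemma div_aux: "0 < (d::nat) \<Longrightarrow> c < d \<Longrightarrow> (d*a + c) div d = a"
  by simp

lemma no_d_forever: assumes x: "x \<in> inv_limit Gtop g" and n: "n \<ge> 1"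
  and d: "\<forall>N\<ge>n. \<exists>m. x N = Ed N m" shows False
proof -
  define ix where "ix N = (case x N of Ed _ m \<Rightarrow> m | _ \<Rightarrow> 0)" for N
  have xN: "x N = Ed N (ix N)" if Nn: "N \<ge> n" for N
  proof -
    obtain m where "x N = Ed N m" using d Nn by blast
    thus ?thesis unfolding ix_def by simp
  qed
  define q where "q N = (ix N - 1) div (N - 1)" for N
  have step: "q (Suc N) < q N" if N: "N \<ge> Suc n" for N
  proof -
    let ?m = "ix (Suc N)"
    have "g N (x (Suc N)) = x N" using il_step x N n by simp
    hence e: "g N (Ed (Suc N) ?m) = Ed N (ix N)" using xN N by simp
    have nz: "?m mod N \<noteq> 0" using e by (auto simp: g_def split: if_splits)
    hence ixN: "ix N = (N-1)*(?m div N + 1) + ?m mod N" using e by (auto simp: g_def)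
    have N2: "N \<ge> 2" using N n by simp
    have r1: "?m mod N - 1 < N - 1" using mod_less_divisor[of N ?m] N2 nz by linarith
    have eq: "ix N - 1 = (N-1)*(?m div N + 1) + (?m mod N - 1)" using ixN nz by simp
    have "((N-1)*(?m div N + 1) + (?m mod N - 1)) div (N-1) = ?m div N + 1"
      by (rule div_aux) (use N2 r1 in auto)
    hence qN: "q N = ?m div N + 1" unfolding q_def by (simp only: eq)
    have "?m = N * (?m div N) + ?m mod N" by simp
    hence "?m - 1 = N * (?m div N) + (?m mod N - 1)" using nz by simp
    moreover have "?m mod N - 1 < N" using mod_less_divisor[of N ?m] N2 by linarith
    ultimately have "q (Suc N) = ?m div N" unfolding q_def using div_aux[of N "?m mod N - 1" "?m div N"] N2 by simp
    thus ?thesis using qN by simp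
  qed
  have "\<forall>t. q (Suc n + Suc t) < q (Suc n + t)"
  proof
    fix t show "q (Suc n + Suc t) < q (Suc n + t)" using step[of "Suc n + t"] by simp
  qed
  thus False using desc_nat[of "\<lambda>t. q (Suc n + t)"] by simp
qed

lemma nat_trans: assumes "(x,y) \<in> natural_rel Gtop r g" "(y,z) \<in> natural_rel Gtop r g"
  shows "(x,z) \<in> natural_rel Gtop r g"
proof -
  have x: "x \<in> inv_limit Gtop g" and z: "z \<in> inv_limit Gtop g"
    and xy: "\<forall>n\<ge>1. (x n, y n) \<in> r n" and yz: "\<forall>n\<ge>1. (y n, z n) \<in> r n"
    using assms by (auto simp: natural_rel_def)
  have "(x n, z n) \<in> r n" if n: "n \<ge> 1" for n
  proof (rule ccontr)
    assume nn: "(x n, z n) \<notin> r n"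
    have "\<forall>N\<ge>n. \<exists>m. x N = Ed N m"
    proof (intro allI impI)
      fix N assume "N \<ge> n"
      hence nz: "(x N, z N) \<notin> r N" using down[OF x z n] nn by blast
      have a: "(x N, y N) \<in> r N" "(y N, z N) \<in> r N" using xy yz n \<open>N \<ge> n\<close> by auto
      show "\<exists>m. x N = Ed N m"
      proof (rule ccontr)
        assume "\<not> (\<exists>m. x N = Ed N m)"
        hence "\<forall>m. x N \<noteq> Ed N m" by blast
        from trans_fail[OF a this] nz show False by blast
      qed
    qed
    thus False using no_d_forever[OF x n] by blast
  qed
  thus ?thesis using x z by (auto simp: natural_rel_def)
qed

lemma nat_equiv: "equiv (inv_limit Gtop g) (natural_rel Gtop r g)"
proof (rule equivI)
  show "natural_rel Gtop r g \<subseteq> inv_limit Gtop g \<times> inv_limit Gtop g"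
    unfolding natural_rel_def by auto
  show "refl_on (inv_limit Gtop g) (natural_rel Gtop r g)"
    unfolding refl_on_def natural_rel_def using il_G r_refl by auto
  show "sym (natural_rel Gtop r g)"
    using r_sym unfolding sym_def natural_rel_def by blast
  show "trans (natural_rel Gtop r g)"
    using nat_trans unfolding trans_def by blast
qed

lemma gcell: "gcell_structure Gtop r g"
  unfolding gcell_structure_def
proof (intro conjI allI impI)
  fix i :: nat assume i: "i \<ge> 1"
  have ne: "G i \<noteq> {}" using G_Ea by blast
  show "cellular_graph (Gtop i) (r i)"
    unfolding cellular_graph_def topGtop using ne r_sub[OF i] r_refl r_sym by blast
  show "continuous_map (Gtop (Suc i)) (Gtop i) (g i)"
    unfolding Gtop_def using g_maps[OF i] by auto
  fix x y assume "(x,y) \<in> r (Suc i)"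
  thus "(g i x, g i y) \<in> r i" using edge i by blast
qed (rule nat_equiv)

lemma topGinf: "topspace Ginf = inv_limit Gtop g"
  unfolding Ginf_def inv_limit_top_def by (auto simp: inv_limit_def)

lemma istop: "istopology (\<lambda>U. U \<subseteq> topspace T // E \<and> openin T {x \<in> topspace T. E `` {x} \<in> U})"
  unfolding istopology_def
proof (rule conjI; (intro allI impI)?)
  fix S U assume a: "S \<subseteq> topspace T // E \<and> openin T {x \<in> topspace T. E `` {x} \<in> S}"
    and b: "U \<subseteq> topspace T // E \<and> openin T {x \<in> topspace T. E `` {x} \<in> U}"
  have "{x \<in> topspace T. E `` {x} \<in> S \<inter> U} = {x \<in> topspace T. E `` {x} \<in> S} \<inter> {x \<in> topspace T. E `` {x} \<in> U}"
    by auto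
  thus "S \<inter> U \<subseteq> topspace T // E \<and> openin T {x \<in> topspace T. E `` {x} \<in> S \<inter> U}"
    using a b by auto
next
  fix K assume a: "\<forall>U\<in>K. U \<subseteq> topspace T // E \<and> openin T {x \<in> topspace T. E `` {x} \<in> U}"
  have "{x \<in> topspace T. E `` {x} \<in> \<Union>K} = \<Union>((\<lambda>U. {x \<in> topspace T. E `` {x} \<in> U}) ` K)"
    by auto
  moreover have "openin T (\<Union>((\<lambda>U. {x \<in> topspace T. E `` {x} \<in> U}) ` K))"
    using a by (intro openin_Union) auto
  ultimately show "\<Union>K \<subseteq> topspace T // E \<and> openin T {x \<in> topspace T. E `` {x} \<in> \<Union>K}"
    using a by auto
qed

lemma openin_Gstar: "openin Gstar U \<longleftrightarrow> U \<subseteq> inv_limit Gtop g // rnat \<and>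
    openin Ginf {x \<in> inv_limit Gtop g. rnat `` {x} \<in> U}"
  unfolding Gstar_def quotient_top_def by (subst topology_inverse'[OF istop]) (simp add: topGinf)

lemma topspace_Gstar: "topspace Gstar = inv_limit Gtop g // rnat"
proof
  show "topspace Gstar \<subseteq> inv_limit Gtop g // rnat"
    using openin_Gstar openin_topspace by blast
  have "{x \<in> inv_limit Gtop g. rnat `` {x} \<in> inv_limit Gtop g // rnat} = topspace Ginf"
    using topGinf by (auto intro: quotientI)
  hence "openin Gstar (inv_limit Gtop g // rnat)"
    unfolding openin_Gstar by simp
  thus "inv_limit Gtop g // rnat \<subseteq> topspace Gstar" by (rule openin_subset)
qed

lemma cyl: assumes "openin Ginf S" "w \<in> S"
  shows "\<exists>n. \<forall>z\<in>inv_limit Gtop g. (\<forall>i. 1 \<le> i \<and> i \<le> n \<longrightarrow> z i = w i) \<longrightarrow> z \<in> S"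
proof -
  obtain T where T: "openin (product_topology Gtop {1..}) T" "S = T \<inter> inv_limit Gtop g"
    using assms(1) unfolding Ginf_def inv_limit_top_def openin_subtopology by blast
  have "w \<in> T" using T assms by auto
  then obtain U where U: "finite {i \<in> {1..}. U i \<noteq> topspace (Gtop i)}" "w \<in> Pi\<^sub>E {1..} U"
    "Pi\<^sub>E {1..} U \<subseteq> T"
    using T(1) unfolding openin_product_topology_alt by blast
  obtain n where n: "\<forall>i\<in>{i \<in> {1..}. U i \<noteq> topspace (Gtop i)}. i \<le> n"
    using U(1) finite_nat_set_iff_bounded_le by blast
  show ?thesis
  proof (intro exI ballI impI)
    fix z assume z: "z \<in> inv_limit Gtop g" "\<forall>i. 1 \<le> i \<and> i \<le> n \<longrightarrow> z i = w i"
    have "z \<in> Pi\<^sub>E {1..} U"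
    proof (rule PiE_I)
      fix i :: nat assume i: "i \<in> {1..}"
      show "z i \<in> U i"
      proof (cases "i \<le> n")
        case True thus ?thesis using z U(2) i by auto
      next
        case False
        show ?thesis
        proof (cases "U i = topspace (Gtop i)")
          case False2: False
          hence "i \<in> {i \<in> {1..}. U i \<noteq> topspace (Gtop i)}" using i by simp
          hence "i \<le> n" using n by blast
          thus ?thesis using False by simp
        next
          case True
          thus ?thesis using il_G[OF z(1)] i by auto
        qed
      qed
    next
      fix i :: nat assume "i \<notin> {1..}"
      thus "z i = undefined" using z(1) unfolding inv_limit_def by auto
    qed
    thus "z \<in> S" using U(3) T(2) z(1) by auto
  qed
qed

lemma open_coord: assumes "i \<ge> 1" shows "openin Ginf {z \<in> inv_limit Gtop g. z i = c}"
proof -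
  have cm: "continuous_map Ginf (Gtop i) (\<lambda>z. z i)"
    unfolding Ginf_def inv_limit_top_def
    by (rule continuous_map_from_subtopology, rule continuous_map_product_projection) (use assms in auto)
  have "openin (Gtop i) ({c} \<inter> G i)" by (simp add: Gtop_def)
  from openin_continuous_map_preimage[OF cm this]
  have "openin Ginf {z \<in> topspace Ginf. z i \<in> {c} \<inter> G i}" .
  moreover have "{z \<in> topspace Ginf. z i \<in> {c} \<inter> G i} = {z \<in> inv_limit Gtop g. z i = c}"
    using topGinf il_G assms by auto
  ultimately show ?thesis by simp
qed

lemma il_0: "x \<in> inv_limit Gtop g \<Longrightarrow> x 0 = undefined"
  unfolding inv_limit_def by auto

lemma il_intro: assumes "\<And>i. i \<ge> 1 \<Longrightarrow> x i \<in> G i" "x 0 = undefined"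
  "\<And>i. i \<ge> 1 \<Longrightarrow> g i (x (Suc i)) = x i"
  shows "x \<in> inv_limit Gtop g"
  unfolding inv_limit_def
proof (intro CollectI conjI PiE_I allI impI)
  fix i :: nat assume "i \<in> {1..}" thus "x i \<in> topspace (Gtop i)" using assms(1) by simp
next
  fix i :: nat assume "i \<notin> {1..}" hence "i = 0" by simp
  thus "x i = undefined" using assms(2) by simp
qed (use assms(3) in auto)

lemma abar_il: "abar \<in> inv_limit Gtop g"
  by (rule il_intro) (auto simp: abar_def g_def)

lemma bbar_il: "k \<ge> 1 \<Longrightarrow> bbar k \<in> inv_limit Gtop g"
  by (rule il_intro) (auto simp: bbar_def g_def G_def)

lemma r_to_b: "(p, Eb N k) \<in> r N \<Longrightarrow> k < N \<Longrightarrow> p = Eb N k \<or> (\<exists>m. p = Ed N m)"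
  unfolding r_def by auto

lemma eb_down_aux: assumes "x \<in> inv_limit Gtop g"
  shows "n \<ge> 1 \<Longrightarrow> x (n+d) = Eb (n+d) k \<Longrightarrow> x n = Eb n k"
proof (induction d arbitrary: n)
  case 0 thus ?case by simp
next
  case (Suc d)
  have "x (Suc n + d) = Eb (Suc n + d) k" using Suc.prems by simp
  hence "x (Suc n) = Eb (Suc n) k" using Suc.IH[of "Suc n"] by simp
  hence "g n (x (Suc n)) = Eb n k" by (simp add: g_def)
  thus ?case using il_step assms Suc.prems by simp
qed

lemma bbar_class: assumes "(x, bbar k) \<in> rnat" "k \<ge> 1" shows "x = bbar k"
proof (rule ccontr)
  assume ne: "x \<noteq> bbar k"
  have x: "x \<in> inv_limit Gtop g" and rel: "\<forall>n\<ge>1. (x n, bbar k n) \<in> r n"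
    using assms unfolding rnat_def natural_rel_def by auto
  obtain n where n: "x n \<noteq> bbar k n" using ne by blast
  have n1: "n \<ge> 1" using n il_0[OF x] by (cases n) (auto simp: bbar_def)
  have "\<forall>N\<ge>max n (k+1). \<exists>m. x N = Ed N m"
  proof (intro allI impI)
    fix N assume N: "N \<ge> max n (k+1)"
    have "(x N, Eb N k) \<in> r N" using rel N by (auto simp: bbar_def)
    hence "x N = Eb N k \<or> (\<exists>m. x N = Ed N m)" using r_to_b N by auto
    moreover have "x N \<noteq> Eb N k"
    proof
      assume "x N = Eb N k"
      hence "x n = Eb n k" using eb_down_aux[OF x n1, of "N - n" k] N by simp
      thus False using n n1 by (simp add: bbar_def)
    qed
    ultimately show "\<exists>m. x N = Ed N m" by blast
  qed
  moreover have "max n (k+1) \<ge> 1" by simp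
  ultimately show False using no_d_forever[OF x] by blast
qed

lemma abar_not_b: "k \<ge> 1 \<Longrightarrow> (abar, bbar k) \<notin> rnat"
proof
  assume "(abar, bbar k) \<in> rnat"
  hence "(Ea (k+1), Eb (k+1) k) \<in> r (k+1)"
    unfolding rnat_def natural_rel_def abar_def bbar_def by force
  thus False unfolding r_def by auto
qed

definition xs :: "nat \<Rightarrow> nat \<Rightarrow> nat \<Rightarrow> elt" where
  "xs k M i = (if i \<ge> 1 then (if i \<le> k then Ea i else if i \<le> M then Ed i ((i-1)*(M-i)+k)
     else Ec 1 i (L M + k + i - M)) else undefined)"

definition ys :: "nat \<Rightarrow> nat \<Rightarrow> nat \<Rightarrow> elt" where
  "ys k M i = (if i \<ge> 1 then (if i \<le> M then Eb i k else Ec 2 i (L M + k + i - M)) else undefined)"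

lemma L_grow: "M \<le> i \<Longrightarrow> L M + (i - M)*M \<le> L i"
proof (induction i rule: dec_induct)
  case base thus ?case by simp
next
  case (step i)
  have "(Suc i - M)*M = (i - M)*M + M" using step.hyps by (simp add: Suc_diff_le)
  thus ?case using step by simp
qed

lemma idx_bound: assumes "1 \<le> k" "k < M" "M < i" shows "L M + k + i - M \<le> L i"
proof -
  have "(i-M)*M \<ge> (i-M)*(k+1)" using assms by (intro mult_le_mono2) simp
  moreover have "(i-M)*(k+1) = (i-M)*k + (i-M)" by simp
  moreover have "(i-M)*k \<ge> k" using assms by simp
  ultimately have "(i-M)*M \<ge> k + (i - M)" by linarith
  thus ?thesis using L_grow[of M i] assms by linarith
qed

context
  fixes k M :: nat assumes kM: "1 \<le> k" "k < M"
begin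

lemma xs_G: "i \<ge> 1 \<Longrightarrow> xs k M i \<in> G i"
  using kM idx_bound[OF kM, of i] by (auto simp: xs_def G_def)

lemma ys_G: "i \<ge> 1 \<Longrightarrow> ys k M i \<in> G i"
  using kM idx_bound[OF kM, of i] by (auto simp: ys_def G_def)

lemma xs_g: assumes i: "i \<ge> 1" shows "g i (xs k M (Suc i)) = xs k M i"
proof -
  consider "i < k" | "i = k" | "k < i" "i < M" | "i = M" | "M < i" by linarith
  thus ?thesis
  proof cases
    case 1 thus ?thesis using i by (simp add: xs_def g_def)
  next
    case 2
    have e: "xs k M (Suc i) = Ed (Suc k) (k*(M - Suc k) + k)" using 2 kM by (simp add: xs_def)
    have "(k*(M - Suc k) + k) mod k = 0" by (simp add: mod_add_left_eq)
    thus ?thesis using e 2 i by (simp add: xs_def g_def)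
  next
    case 3
    have e: "xs k M (Suc i) = Ed (Suc i) (i*(M - Suc i) + k)" using 3 kM by (simp add: xs_def)
    have m: "(i*(M - Suc i) + k) mod i = k" "(i*(M - Suc i) + k) div i = M - Suc i" using 3 by auto
    have "(i - 1) * (M - Suc i + 1) + k = (i-1)*(M-i) + k" using 3 by (simp add: Suc_diff_Suc)
    thus ?thesis using e m 3 kM by (simp add: xs_def g_def)
  next
    case 4
    have e: "xs k M (Suc i) = Ec 1 (Suc M) (L M + k + 1)" using 4 kM by (simp add: xs_def)
    thus ?thesis using 4 kM by (simp add: xs_def g_def)
  next
    case 5
    have e: "xs k M (Suc i) = Ec 1 (Suc i) (L M + k + i + 1 - M)" using 5 kM by (simp add: xs_def)
    have "L M + k + i + 1 - M \<le> L i + 1" using idx_bound[OF kM 5] by simp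
    thus ?thesis using e 5 kM by (simp add: xs_def g_def)
  qed
qed

lemma ys_g: assumes i: "i \<ge> 1" shows "g i (ys k M (Suc i)) = ys k M i"
proof -
  consider "i < M" | "i = M" | "M < i" by linarith
  thus ?thesis
  proof cases
    case 1 thus ?thesis using i by (simp add: ys_def g_def)
  next
    case 2
    have e: "ys k M (Suc i) = Ec 2 (Suc M) (L M + k + 1)" using 2 kM by (simp add: ys_def)
    thus ?thesis using 2 kM by (simp add: ys_def g_def)
  next
    case 3
    have e: "ys k M (Suc i) = Ec 2 (Suc i) (L M + k + i + 1 - M)" using 3 kM by (simp add: ys_def)
    have "L M + k + i + 1 - M \<le> L i + 1" using idx_bound[OF kM 3] by simp
    thus ?thesis using e 3 kM by (simp add: ys_def g_def)
  qed
qed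

lemma xs_il: "xs k M \<in> inv_limit Gtop g"
  by (rule il_intro) (use xs_G xs_g in \<open>auto simp: xs_def\<close>)

lemma ys_il: "ys k M \<in> inv_limit Gtop g"
  by (rule il_intro) (use ys_G ys_g in \<open>auto simp: ys_def\<close>)

lemma xs_ys_rel: "(xs k M, ys k M) \<in> rnat"
  unfolding rnat_def natural_rel_def
proof (intro CollectI conjI case_prodI allI impI xs_il ys_il)
  fix i :: nat assume i: "i \<ge> 1"
  consider "i \<le> k" | "k < i" "i \<le> M" | "M < i" by linarith
  thus "(xs k M i, ys k M i) \<in> r i"
  proof cases
    case 1 thus ?thesis using i kM by (auto simp: xs_def ys_def r_def)
  next
    case 2 thus ?thesis using i kM by (auto simp: xs_def ys_def intro!: r_db[where j="M-i"])
  next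
    case 3 thus ?thesis using i kM idx_bound[OF kM 3] unfolding xs_def ys_def r_def by auto
  qed
qed

lemma xs_a: "1 \<le> i \<Longrightarrow> i \<le> k \<Longrightarrow> xs k M i = abar i"
  by (simp add: xs_def abar_def)

lemma ys_b: "1 \<le> i \<Longrightarrow> i \<le> M \<Longrightarrow> ys k M i = bbar k i"
  by (simp add: ys_def bbar_def)

end

lemma rnat_equiv: "equiv (inv_limit Gtop g) rnat"
  unfolding rnat_def by (rule nat_equiv)

lemma class_b_iff: assumes "x \<in> inv_limit Gtop g" "k \<ge> 1"
  shows "rnat `` {x} = rnat `` {bbar k} \<longleftrightarrow> x = bbar k"
proof
  assume "rnat `` {x} = rnat `` {bbar k}"
  hence "(x, bbar k) \<in> rnat" using equiv_class_eq_iff[OF rnat_equiv] assms bbar_il by blast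
  thus "x = bbar k" using bbar_class assms by blast
qed simp

lemma Q_open: "openin Ginf {x \<in> inv_limit Gtop g. \<forall>k\<ge>1. x \<noteq> bbar k}" (is "openin Ginf ?Q")
proof (subst openin_subopen, intro ballI)
  fix x assume xQ: "x \<in> ?Q"
  hence x: "x \<in> inv_limit Gtop g" by simp
  show "\<exists>T. openin Ginf T \<and> x \<in> T \<and> T \<subseteq> ?Q"
  proof (cases "\<exists>k0. x 1 = Eb 1 k0")
    case True
    then obtain k0 where k0: "x 1 = Eb 1 k0" by blast
    have "k0 \<ge> 1" using il_G[OF x, of 1] k0 by (auto simp: G_def)
    hence "x \<noteq> bbar k0" using xQ by auto
    then obtain N where N: "x N \<noteq> bbar k0 N" by blast
    have N1: "N \<ge> 1" using N il_0[OF x] by (cases N) (auto simp: bbar_def)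
    let ?T = "{z \<in> inv_limit Gtop g. z 1 = x 1} \<inter> {z \<in> inv_limit Gtop g. z N = x N}"
    have "openin Ginf ?T" using open_coord N1 by (intro openin_Int) auto
    moreover have "?T \<subseteq> ?Q"
    proof
      fix z assume "z \<in> ?T"
      hence z: "z \<in> inv_limit Gtop g" "z 1 = x 1" "z N = x N" by auto
      show "z \<in> ?Q"
      proof (intro CollectI conjI allI impI notI z(1))
        fix k :: nat assume zk: "k \<ge> 1" "z = bbar k"
        hence "k = k0" using k0 z by (simp add: bbar_def)
        thus False using z zk N by simp
      qed
    qed
    ultimately show ?thesis using x by blast
  next
    case False
    let ?T = "{z \<in> inv_limit Gtop g. z 1 = x 1}"
    have "openin Ginf ?T" using open_coord by auto
    moreover have "?T \<subseteq> ?Q"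
    proof
      fix z assume "z \<in> ?T"
      hence z: "z \<in> inv_limit Gtop g" "z 1 = x 1" by auto
      show "z \<in> ?Q"
      proof (intro CollectI conjI allI impI notI z(1))
        fix k :: nat assume zk: "k \<ge> 1" "z = bbar k"
        hence "x 1 = Eb 1 k" using z by (simp add: bbar_def)
        thus False using False by blast
      qed
    qed
    ultimately show ?thesis using x by blast
  qed
qed

lemma B_closed: "closedin Gstar (qmap rnat ` {bbar k | k. k \<ge> 1})" (is "closedin Gstar ?B")
  unfolding closedin_def topspace_Gstar
proof
  show B: "?B \<subseteq> inv_limit Gtop g // rnat"
    using bbar_il by (auto simp: qmap_def intro: quotientI)
  have "{x \<in> inv_limit Gtop g. rnat `` {x} \<in> inv_limit Gtop g // rnat - ?B}
     = {x \<in> inv_limit Gtop g. \<forall>k\<ge>1. x \<noteq> bbar k}"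
    using class_b_iff by (auto simp: qmap_def intro: quotientI)
  thus "openin Gstar (inv_limit Gtop g // rnat - ?B)"
    unfolding openin_Gstar using Q_open by auto
qed

lemma a_notin_B: "qmap rnat abar \<notin> qmap rnat ` {bbar k | k. k \<ge> 1}"
proof
  assume "qmap rnat abar \<in> qmap rnat ` {bbar k | k. k \<ge> 1}"
  then obtain k where k: "k \<ge> 1" "rnat `` {abar} = rnat `` {bbar k}" by (auto simp: qmap_def)
  hence "(abar, bbar k) \<in> rnat" using equiv_class_eq_iff[OF rnat_equiv] abar_il bbar_il by blast
  thus False using abar_not_b k by blast
qed

lemma nosep: "\<not> (\<exists>U V. openin Gstar U \<and> openin Gstar V \<and> qmap rnat abar \<in> U
              \<and> qmap rnat ` {bbar k | k. k \<ge> 1} \<subseteq> V \<and> disjnt U V)"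
proof
  assume "\<exists>U V. openin Gstar U \<and> openin Gstar V \<and> qmap rnat abar \<in> U
              \<and> qmap rnat ` {bbar k | k. k \<ge> 1} \<subseteq> V \<and> disjnt U V"
  then obtain U V where UV: "openin Gstar U" "openin Gstar V" "qmap rnat abar \<in> U"
    "qmap rnat ` {bbar k | k. k \<ge> 1} \<subseteq> V" "disjnt U V" by blast
  have PU: "openin Ginf {x \<in> inv_limit Gtop g. rnat `` {x} \<in> U}" using UV(1) openin_Gstar by blast
  have PV: "openin Ginf {x \<in> inv_limit Gtop g. rnat `` {x} \<in> V}" using UV(2) openin_Gstar by blast
  obtain n where n: "\<forall>z\<in>inv_limit Gtop g. (\<forall>i. 1 \<le> i \<and> i \<le> n \<longrightarrow> z i = abar i)
     \<longrightarrow> z \<in> {x \<in> inv_limit Gtop g. rnat `` {x} \<in> U}"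
    using cyl[OF PU, of abar] UV(3) abar_il by (auto simp: qmap_def)
  define k where "k = Suc n"
  have k1: "k \<ge> 1" by (simp add: k_def)
  have "rnat `` {bbar k} \<in> V" using UV(4) k1 by (auto simp: qmap_def)
  then obtain m where m: "\<forall>z\<in>inv_limit Gtop g. (\<forall>i. 1 \<le> i \<and> i \<le> m \<longrightarrow> z i = bbar k i)
     \<longrightarrow> z \<in> {x \<in> inv_limit Gtop g. rnat `` {x} \<in> V}"
    using cyl[OF PV, of "bbar k"] bbar_il[OF k1] by auto
  define M where "M = Suc (max m k)"
  have kM: "1 \<le> k" "k < M" using k1 by (auto simp: M_def)
  have "rnat `` {xs k M} \<in> U"
    using n xs_il[OF kM] xs_a[OF kM] by (auto simp: k_def)
  moreover have "rnat `` {ys k M} \<in> V"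
    using m ys_il[OF kM] ys_b[OF kM] by (auto simp: M_def)
  moreover have "rnat `` {xs k M} = rnat `` {ys k M}"
    using equiv_class_eq[OF rnat_equiv xs_ys_rel[OF kM]] .
  ultimately show False using UV(5) unfolding disjnt_def by auto
qed

theorem mainTheorem10:
  shows "gcell_structure Gtop r g
    \<and> abar \<in> topspace Ginf \<and> {bbar k | k. k \<ge> 1} \<subseteq> topspace Ginf
    \<and> closedin Gstar (qmap rnat ` {bbar k | k. k \<ge> 1})
    \<and> qmap rnat abar \<notin> qmap rnat ` {bbar k | k. k \<ge> 1}
    \<and> \<not> (\<exists>U V. openin Gstar U \<and> openin Gstar V \<and> qmap rnat abar \<in> U
              \<and> qmap rnat ` {bbar k | k. k \<ge> 1} \<subseteq> V \<and> disjnt U V)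
    \<and> \<not> regular_space Gstar"
proof (intro conjI)
  show "gcell_structure Gtop r g" by (rule gcell)
  show "abar \<in> topspace Ginf" using abar_il topGinf by simp
  show "{bbar k | k. k \<ge> 1} \<subseteq> topspace Ginf" using bbar_il topGinf by auto
  show "closedin Gstar (qmap rnat ` {bbar k | k. k \<ge> 1})" by (rule B_closed)
  show "qmap rnat abar \<notin> qmap rnat ` {bbar k | k. k \<ge> 1}" by (rule a_notin_B)
  show "\<not> (\<exists>U V. openin Gstar U \<and> openin Gstar V \<and> qmap rnat abar \<in> U
              \<and> qmap rnat ` {bbar k | k. k \<ge> 1} \<subseteq> V \<and> disjnt U V)" by (rule nosep)
  have "qmap rnat abar \<in> topspace Gstar"
    unfolding topspace_Gstar qmap_def using abar_il by (rule quotientI)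
  thus "\<not> regular_space Gstar"
    unfolding regular_space_def using B_closed a_notin_B nosep by blast
qed

end
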